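(* Let $G$ be a finite group. Every irreducible NIM-rep $(A,M)$ of the Tambara–Yamagami fusion ring $K(G,0)$ has basis $M$ consisting of at most two $G$-orbits.
   Context: The near-group fusion ring $K(G,\alpha)$ is the free $\mathbb{Z}$-module with basis $G\cup\{X\}$, with multiplication given by the group law on $G$, $gX=Xg=X$ for $g\in G$, and $X^2=\sum_{g\in G}g+\alpha X$; involution $g^*=g^{-1}$, $X^*=X$; $K(G,0)$ is the Tambara–Yamagami fusion ring. A NIM-rep of a fusion ring $(R,B)$ is a nonzero left $R$-module $A$ which is a free $\mathbb{Z}$-module with a fixed finite basis $M$, such that each $b\vartriangleright m$ is a non-negative integer combination of elements of $M$, and $(b\vartriangleright m,m')=(m,b^*\vartriangleright m')$ for the form making $M$ orthonormal. The elements of $G$ permute $M$, and the $G$-orbits partition $M$. A NIM-rep is irreducible if no proper nonempty subset of $M$ spans an $R$-submodule. *)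

theory Defs
  imports "HOL-Algebra.Group"
begin

text \<open>Basis of the near-group fusion ring K(G,alpha): Some g for g in G, None for X.\<close>

definition ng_basis :: "('g, 'z) monoid_scheme \<Rightarrow> 'g option set" where
  "ng_basis G = insert None (Some ` carrier G)"

text \<open>Structure constants N_{b c}^d of K(G,alpha): b c = sum_d N b c d * d.\<close>

definition ng_coeff :: "('g, 'z) monoid_scheme \<Rightarrow> nat \<Rightarrow> 'g option \<Rightarrow> 'g option \<Rightarrow> 'g option \<Rightarrow> nat" where
  "ng_coeff G \<alpha> b c d =
     (case (b, c) of
        (Some g, Some h) \<Rightarrow> (if d = Some (g \<otimes>\<^bsub>G\<^esub> h) then 1 else 0)
      | (Some g, None) \<Rightarrow> (if d = None then 1 else 0)
      | (None, Some h) \<Rightarrow> (if d = None then 1 else 0)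
      | (None, None) \<Rightarrow> (case d of None \<Rightarrow> \<alpha> | Some _ \<Rightarrow> 1))"

definition ng_dual :: "('g, 'z) monoid_scheme \<Rightarrow> 'g option \<Rightarrow> 'g option" where
  "ng_dual G b = (case b of None \<Rightarrow> None | Some g \<Rightarrow> Some (inv\<^bsub>G\<^esub> g))"

text \<open>A NIM-rep of K(G,alpha) with finite basis M: act b m m' is the (non-negative integer)
  coefficient of m' in b acting on m.\<close>

definition ng_nimrep ::
  "('g, 'z) monoid_scheme \<Rightarrow> nat \<Rightarrow> 'm set \<Rightarrow> ('g option \<Rightarrow> 'm \<Rightarrow> 'm \<Rightarrow> nat) \<Rightarrow> bool" where
  "ng_nimrep G \<alpha> M act \<longleftrightarrow>
     finite M \<and> M \<noteq> {} \<and>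
     (\<forall>m\<in>M. \<forall>m'\<in>M. act (Some \<one>\<^bsub>G\<^esub>) m m' = (if m = m' then 1 else 0)) \<and>
     (\<forall>b\<in>ng_basis G. \<forall>c\<in>ng_basis G. \<forall>m\<in>M. \<forall>m'\<in>M.
        (\<Sum>m''\<in>M. act c m m'' * act b m'' m') =
        (\<Sum>d\<in>ng_basis G. ng_coeff G \<alpha> b c d * act d m m')) \<and>
     (\<forall>b\<in>ng_basis G. \<forall>m\<in>M. \<forall>m'\<in>M. act b m m' = act (ng_dual G b) m' m)"

text \<open>S spans an R-submodule iff b acting on any m in S is supported in S.\<close>

definition ng_closed ::
  "('g, 'z) monoid_scheme \<Rightarrow> 'm set \<Rightarrow> ('g option \<Rightarrow> 'm \<Rightarrow> 'm \<Rightarrow> nat) \<Rightarrow> 'm set \<Rightarrow> bool" where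
  "ng_closed G M act S \<longleftrightarrow>
     (\<forall>b\<in>ng_basis G. \<forall>m\<in>S. \<forall>m'\<in>M. act b m m' \<noteq> 0 \<longrightarrow> m' \<in> S)"

definition ng_irreducible ::
  "('g, 'z) monoid_scheme \<Rightarrow> nat \<Rightarrow> 'm set \<Rightarrow> ('g option \<Rightarrow> 'm \<Rightarrow> 'm \<Rightarrow> nat) \<Rightarrow> bool" where
  "ng_irreducible G \<alpha> M act \<longleftrightarrow> ng_nimrep G \<alpha> M act \<and>
     (\<forall>S. S \<subseteq> M \<and> S \<noteq> {} \<and> S \<noteq> M \<longrightarrow> \<not> ng_closed G M act S)"

definition ng_orbit ::
  "('g, 'z) monoid_scheme \<Rightarrow> 'm set \<Rightarrow> ('g option \<Rightarrow> 'm \<Rightarrow> 'm \<Rightarrow> nat) \<Rightarrow> 'm \<Rightarrow> 'm set" where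
  "ng_orbit G M act m = {m'\<in>M. \<exists>g\<in>carrier G. act (Some g) m m' \<noteq> 0}"

end

theory Submission
  imports Defs
begin

lemma basis_fin: "finite (carrier G) \<Longrightarrow> finite (ng_basis G)"
  by (simp add: ng_basis_def)

lemma rhs_gg:
  assumes "group G" "finite (carrier G)" "g \<in> carrier G" "h \<in> carrier G"
  shows "(\<Sum>d\<in>ng_basis G. ng_coeff G \<alpha> (Some g) (Some h) d * act d m m') = act (Some (g \<otimes>\<^bsub>G\<^esub> h)) m m'"
proof -
  have "(\<Sum>d\<in>ng_basis G. ng_coeff G \<alpha> (Some g) (Some h) d * act d m m')
     = (\<Sum>d\<in>ng_basis G. if d = Some (g \<otimes>\<^bsub>G\<^esub> h) then act d m m' else 0)"
    by (rule sum.cong) (auto simp: ng_coeff_def)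
  also have "\<dots> = act (Some (g \<otimes>\<^bsub>G\<^esub> h)) m m'"
    using assms by (simp add: sum.delta basis_fin ng_basis_def group.is_monoid monoid.m_closed)
  finally show ?thesis .
qed

lemma rhs_gX:
  assumes "finite (carrier G)"
  shows "(\<Sum>d\<in>ng_basis G. ng_coeff G \<alpha> (Some g) None d * act d m m') = act None m m'"
proof -
  have "(\<Sum>d\<in>ng_basis G. ng_coeff G \<alpha> (Some g) None d * act d m m')
     = (\<Sum>d\<in>ng_basis G. if d = None then act d m m' else 0)"
    by (rule sum.cong) (auto simp: ng_coeff_def)
  also have "\<dots> = act None m m'"
    using assms by (simp add: sum.delta basis_fin ng_basis_def)
  finally show ?thesis .
qed

lemma rhs_Xg:
  assumes "finite (carrier G)"
  shows "(\<Sum>d\<in>ng_basis G. ng_coeff G \<alpha> None (Some g) d * act d m m') = act None m m'"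
proof -
  have "(\<Sum>d\<in>ng_basis G. ng_coeff G \<alpha> None (Some g) d * act d m m')
     = (\<Sum>d\<in>ng_basis G. if d = None then act d m m' else 0)"
    by (rule sum.cong) (auto simp: ng_coeff_def)
  also have "\<dots> = act None m m'"
    using assms by (simp add: sum.delta basis_fin ng_basis_def)
  finally show ?thesis .
qed

lemma rhs_XX:
  assumes "finite (carrier G)"
  shows "(\<Sum>d\<in>ng_basis G. ng_coeff G 0 None None d * act d m m') = (\<Sum>g\<in>carrier G. act (Some g) m m')"
proof -
  have "(\<Sum>d\<in>ng_basis G. ng_coeff G 0 None None d * act d m m')
     = (\<Sum>d\<in>Some ` carrier G. act d m m')"
    using assms by (simp add: ng_basis_def ng_coeff_def sum.insert_if image_iff)
      (rule sum.cong; auto simp: ng_coeff_def)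
  also have "\<dots> = (\<Sum>g\<in>carrier G. act (Some g) m m')"
    by (simp add: sum.reindex)
  finally show ?thesis .
qed

lemma prod_pos:
  fixes f :: "'m \<Rightarrow> nat"
  assumes "finite M" "x \<in> M" "f x \<noteq> 0" "k x \<noteq> 0"
  shows "(\<Sum>y\<in>M. f y * k y) \<noteq> 0"
proof -
  have "f x * k x \<le> (\<Sum>y\<in>M. f y * k y)"
    using assms by (intro member_le_sum) auto
  thus ?thesis using assms by (metis le_zero_eq mult_is_0)
qed


theorem corollary3p16:
  fixes G :: "('g, 'z) monoid_scheme"
    and M :: "'m set"
    and act :: "'g option \<Rightarrow> 'm \<Rightarrow> 'm \<Rightarrow> nat"
  assumes "group G" and "finite (carrier G)"
    and "ng_irreducible G 0 M act"
  shows "card (ng_orbit G M act ` M) \<le> 2"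
proof -
  have grp: "group G" by fact
  have fin: "finite (carrier G)" by fact
  have nim: "ng_nimrep G 0 M act" and irr: "\<And>S. S \<subseteq> M \<Longrightarrow> S \<noteq> {} \<Longrightarrow> S \<noteq> M \<Longrightarrow> \<not> ng_closed G M act S"
    using assms(3) by (auto simp: ng_irreducible_def)
  have finM: "finite M" and Mne: "M \<noteq> {}"
    and unit: "\<And>m m'. m \<in> M \<Longrightarrow> m' \<in> M \<Longrightarrow> act (Some \<one>\<^bsub>G\<^esub>) m m' = (if m = m' then 1 else 0)"
    and asc: "\<And>b c m m'. b \<in> ng_basis G \<Longrightarrow> c \<in> ng_basis G \<Longrightarrow> m \<in> M \<Longrightarrow> m' \<in> M \<Longrightarrow>
        (\<Sum>m''\<in>M. act c m m'' * act b m'' m') = (\<Sum>d\<in>ng_basis G. ng_coeff G 0 b c d * act d m m')"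
    and adj: "\<And>b m m'. b \<in> ng_basis G \<Longrightarrow> m \<in> M \<Longrightarrow> m' \<in> M \<Longrightarrow> act b m m' = act (ng_dual G b) m' m"
    using nim unfolding ng_nimrep_def by blast+
  have bS: "\<And>g. g \<in> carrier G \<Longrightarrow> Some g \<in> ng_basis G" and bN: "None \<in> ng_basis G"
    by (auto simp: ng_basis_def)
  define R where "R a b \<longleftrightarrow> (\<exists>g\<in>carrier G. act (Some g) a b \<noteq> 0)" for a b
  define Q where "Q a b \<longleftrightarrow> act None a b \<noteq> 0" for a b
  have orb: "\<And>a. ng_orbit G M act a = {b\<in>M. R a b}"
    by (auto simp: ng_orbit_def R_def)
  have Rrefl: "\<And>a. a \<in> M \<Longrightarrow> R a a"
  proof -
    fix a assume a: "a \<in> M"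
    have "\<one>\<^bsub>G\<^esub> \<in> carrier G" using grp by (simp add: group.is_monoid monoid.one_closed)
    thus "R a a" using unit[OF a a] unfolding R_def by (intro bexI[of _ "\<one>\<^bsub>G\<^esub>"]) auto
  qed
  have Rsym: "\<And>a b. a \<in> M \<Longrightarrow> b \<in> M \<Longrightarrow> R a b \<Longrightarrow> R b a"
  proof -
    fix a b assume ab: "a \<in> M" "b \<in> M" "R a b"
    then obtain g where g: "g \<in> carrier G" "act (Some g) a b \<noteq> 0" by (auto simp: R_def)
    have "act (Some g) a b = act (Some (inv\<^bsub>G\<^esub> g)) b a"
      using adj[OF bS[OF g(1)] ab(1,2)] by (simp add: ng_dual_def)
    thus "R b a" using g grp by (auto simp: R_def intro!: bexI[of _ "inv\<^bsub>G\<^esub> g"])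
  qed
  have Rtrans: "\<And>a b c. a \<in> M \<Longrightarrow> b \<in> M \<Longrightarrow> c \<in> M \<Longrightarrow> R a b \<Longrightarrow> R b c \<Longrightarrow> R a c"
  proof -
    fix a b c assume abc: "a \<in> M" "b \<in> M" "c \<in> M" "R a b" "R b c"
    then obtain h g where h: "h \<in> carrier G" "act (Some h) a b \<noteq> 0"
      and g: "g \<in> carrier G" "act (Some g) b c \<noteq> 0" by (auto simp: R_def)
    have "(\<Sum>m''\<in>M. act (Some h) a m'' * act (Some g) m'' c) \<noteq> 0"
      by (rule prod_pos[OF finM abc(2)]) (use h g in auto)
    hence "act (Some (g \<otimes>\<^bsub>G\<^esub> h)) a c \<noteq> 0"
      using asc[OF bS[OF g(1)] bS[OF h(1)] abc(1,3)] rhs_gg[OF grp fin g(1) h(1), where act=act] by simp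
    thus "R a c" unfolding R_def using g h grp by (meson group.is_monoid monoid.m_closed)
  qed
  have QQ: "\<And>a b c. a \<in> M \<Longrightarrow> b \<in> M \<Longrightarrow> c \<in> M \<Longrightarrow> Q a b \<Longrightarrow> Q b c \<Longrightarrow> R a c"
  proof -
    fix a b c assume abc: "a \<in> M" "b \<in> M" "c \<in> M" "Q a b" "Q b c"
    have "(\<Sum>m''\<in>M. act None a m'' * act None m'' c) \<noteq> 0"
      by (rule prod_pos[OF finM abc(2)]) (use abc in \<open>auto simp: Q_def\<close>)
    hence "(\<Sum>g\<in>carrier G. act (Some g) a c) \<noteq> 0"
      using asc[OF bN bN abc(1,3)] rhs_XX[OF fin, where act=act] by simp
    thus "R a c"
    proof (rule contrapos_np)
      assume "\<not> R a c"
      hence "\<forall>g\<in>carrier G. act (Some g) a c = 0" by (auto simp: R_def)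
      thus "(\<Sum>g\<in>carrier G. act (Some g) a c) = 0" by simp
    qed
  qed
  have RQ: "\<And>a b c. a \<in> M \<Longrightarrow> b \<in> M \<Longrightarrow> c \<in> M \<Longrightarrow> R a b \<Longrightarrow> Q b c \<Longrightarrow> Q a c"
  proof -
    fix a b c assume abc: "a \<in> M" "b \<in> M" "c \<in> M" "R a b" "Q b c"
    then obtain g where g: "g \<in> carrier G" "act (Some g) a b \<noteq> 0" by (auto simp: R_def)
    have "(\<Sum>m''\<in>M. act (Some g) a m'' * act None m'' c) \<noteq> 0"
      by (rule prod_pos[OF finM abc(2)]) (use abc g in \<open>auto simp: Q_def\<close>)
    thus "Q a c"
      using asc[OF bN bS[OF g(1)] abc(1,3)] rhs_Xg[OF fin, where act=act] by (simp add: Q_def)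
  qed
  have QR: "\<And>a b c. a \<in> M \<Longrightarrow> b \<in> M \<Longrightarrow> c \<in> M \<Longrightarrow> Q a b \<Longrightarrow> R b c \<Longrightarrow> Q a c"
  proof -
    fix a b c assume abc: "a \<in> M" "b \<in> M" "c \<in> M" "Q a b" "R b c"
    then obtain g where g: "g \<in> carrier G" "act (Some g) b c \<noteq> 0" by (auto simp: R_def)
    have "(\<Sum>m''\<in>M. act None a m'' * act (Some g) m'' c) \<noteq> 0"
      by (rule prod_pos[OF finM abc(2)]) (use abc g in \<open>auto simp: Q_def\<close>)
    thus "Q a c"
      using asc[OF bS[OF g(1)] bN abc(1,3)] rhs_gX[OF fin, where act=act] by (simp add: Q_def)
  qed
  have Qsym: "\<And>a b. a \<in> M \<Longrightarrow> b \<in> M \<Longrightarrow> Q a b \<Longrightarrow> Q b a"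
  proof -
    fix a b assume ab: "a \<in> M" "b \<in> M" "Q a b"
    have "act None a b = act None b a" using adj[OF bN ab(1,2)] by (simp add: ng_dual_def)
    thus "Q b a" using ab(3) by (simp add: Q_def)
  qed
  obtain m where m: "m \<in> M" using Mne by blast
  define S where "S = {b\<in>M. R m b \<or> Q m b}"
  have "ng_closed G M act S"
    unfolding ng_closed_def
  proof (intro ballI impI)
    fix b c d assume b: "b \<in> ng_basis G" and c: "c \<in> S" and d: "d \<in> M" and nz: "act b c d \<noteq> 0"
    have cM: "c \<in> M" using c by (simp add: S_def)
    show "d \<in> S"
    proof (cases b)
      case None
      hence "Q c d" using nz by (simp add: Q_def)
      have "R m c \<or> Q m c" using c by (simp add: S_def)
      thus ?thesis
      proof
        assume "R m c" hence "Q m d" using RQ[OF m cM d] \<open>Q c d\<close> by simp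
        thus ?thesis using d by (simp add: S_def)
      next
        assume "Q m c" hence "R m d" using QQ[OF m cM d] \<open>Q c d\<close> by simp
        thus ?thesis using d by (simp add: S_def)
      qed
    next
      case (Some g)
      hence "g \<in> carrier G" using b by (auto simp: ng_basis_def)
      hence "R c d" using nz Some by (auto simp: R_def)
      have "R m c \<or> Q m c" using c by (simp add: S_def)
      thus ?thesis
      proof
        assume "R m c" hence "R m d" using Rtrans[OF m cM d] \<open>R c d\<close> by simp
        thus ?thesis using d by (simp add: S_def)
      next
        assume "Q m c" hence "Q m d" using QR[OF m cM d] \<open>R c d\<close> by simp
        thus ?thesis using d by (simp add: S_def)
      qed
    qed
  qed
  moreover have "S \<subseteq> M" "S \<noteq> {}" using m Rrefl by (auto simp: S_def)
  ultimately have SM: "S = M" using irr by blast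
  have oeq: "\<And>a b. a \<in> M \<Longrightarrow> b \<in> M \<Longrightarrow> R a b \<Longrightarrow> ng_orbit G M act a = ng_orbit G M act b"
  proof -
    fix a b assume ab: "a \<in> M" "b \<in> M" "R a b"
    have "R b a" using Rsym ab by simp
    show "ng_orbit G M act a = ng_orbit G M act b"
      unfolding orb using Rtrans[OF ab(1) ab(2)] Rtrans[OF ab(2) ab(1)] ab \<open>R b a\<close> by auto
  qed
  show ?thesis
  proof (cases "\<exists>c\<in>M. Q m c")
    case True
    then obtain c where c: "c \<in> M" "Q m c" by blast
    have "ng_orbit G M act ` M \<subseteq> {ng_orbit G M act m, ng_orbit G M act c}"
    proof
      fix x assume "x \<in> ng_orbit G M act ` M"
      then obtain d where d: "d \<in> M" "x = ng_orbit G M act d" by blast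
      have "R m d \<or> Q m d" using d SM by (auto simp: S_def)
      thus "x \<in> {ng_orbit G M act m, ng_orbit G M act c}"
      proof
        assume "R m d" thus ?thesis using oeq m d by auto
      next
        assume "Q m d"
        hence "R c d" using QQ[OF c(1) m d(1)] Qsym[OF m c(1)] c(2) by simp
        thus ?thesis using oeq c d by auto
      qed
    qed
    hence "card (ng_orbit G M act ` M) \<le> card {ng_orbit G M act m, ng_orbit G M act c}"
      by (intro card_mono) auto
    also have "\<dots> \<le> 2" by (simp add: card_insert_if)
    finally show ?thesis .
  next
    case False
    have "ng_orbit G M act ` M \<subseteq> {ng_orbit G M act m}"
    proof
      fix x assume "x \<in> ng_orbit G M act ` M"
      then obtain d where d: "d \<in> M" "x = ng_orbit G M act d" by blast
      have "R m d" using d SM False by (auto simp: S_def)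
      thus "x \<in> {ng_orbit G M act m}" using oeq m d by auto
    qed
    hence "card (ng_orbit G M act ` M) \<le> card {ng_orbit G M act m}"
      by (intro card_mono) auto
    thus ?thesis by simp
  qed
qed

end
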